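(* Consider $CP(N)$ with rates $\psi(i,j)=2ij$ started from $(N,0,\dots,0)$, and let $n_{k,N}(t)$ be the number of clusters of size $k$ at time $t$. Then for every fixed $t>0$ and fixed $k,l$ with $k\neq l$, as $N\to\infty$: $\mathbb E\,n_{k,N}(t)\to0$, $\operatorname{Var} n_{k,N}(t)\to0$ and $\operatorname{cov}(n_{k,N}(t),n_{l,N}(t))\to0$; while $\mathbb E\,n_{N,N}(t)\to1$, so the probability $p_{coag,N}(t)$ of a single cluster of size $N$ at time $t$ tends to $1$ as $N\to\infty$.
   Context: $CP(N)$ is the continuous-time Markov chain on partitions $\eta=(n_1,\dots,n_N)$ of $N$ ($n_k$ = number of clusters of size $k$, $\sum kn_k=N$) in which any two distinct clusters of sizes $i,j$ merge into one of size $i+j$ at rate $\psi(i,j)$; the transition $\eta\to\eta^{(i,j)}$ has rate $n_in_j\psi(i,j)$ for $i\ne j$ and $\frac{n_i(n_i-1)}2\psi(i,i)$ for $i=j$. *)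

theory Defs
  imports Complex_Main
begin

text \<open>A state of CP(N): eta k = number of clusters of size k, k = 1..N, sum k * eta k = N.\<close>
definition parts :: "nat \<Rightarrow> (nat \<Rightarrow> nat) set" where
  "parts N = {eta. (\<forall>k. eta k \<noteq> 0 \<longrightarrow> 1 \<le> k \<and> k \<le> N) \<and> (\<Sum>k=1..N. k * eta k) = N}"

definition merge :: "(nat \<Rightarrow> nat) \<Rightarrow> nat \<Rightarrow> nat \<Rightarrow> (nat \<Rightarrow> nat)" where
  "merge eta i j =
     (let e1 = eta(i := eta i - 1); e2 = e1(j := e1 j - 1) in e2(i + j := e2 (i + j) + 1))"

definition pair_rate :: "(nat \<Rightarrow> nat \<Rightarrow> real) \<Rightarrow> (nat \<Rightarrow> nat) \<Rightarrow> nat \<Rightarrow> nat \<Rightarrow> real" where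
  "pair_rate psi eta i j =
     (if i = j then real (eta i) * (real (eta i) - 1) / 2 * psi i i
      else real (eta i) * real (eta j) * psi i j)"

definition Qoff :: "(nat \<Rightarrow> nat \<Rightarrow> real) \<Rightarrow> nat \<Rightarrow> (nat \<Rightarrow> nat) \<Rightarrow> (nat \<Rightarrow> nat) \<Rightarrow> real" where
  "Qoff psi N eta eta' =
     (\<Sum>(i, j) \<in> (SIGMA i:{1..N}. {i..N}). if merge eta i j = eta' then pair_rate psi eta i j else 0)"

definition Qgen :: "(nat \<Rightarrow> nat \<Rightarrow> real) \<Rightarrow> nat \<Rightarrow> (nat \<Rightarrow> nat) \<Rightarrow> (nat \<Rightarrow> nat) \<Rightarrow> real" where
  "Qgen psi N eta eta' =
     (if eta = eta' then - (\<Sum>e \<in> parts N - {eta}. Qoff psi N eta e) else Qoff psi N eta eta')"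

fun Qpow :: "(nat \<Rightarrow> nat \<Rightarrow> real) \<Rightarrow> nat \<Rightarrow> nat \<Rightarrow> (nat \<Rightarrow> nat) \<Rightarrow> (nat \<Rightarrow> nat) \<Rightarrow> real" where
  "Qpow psi N 0 eta eta' = (if eta = eta' then 1 else 0)"
| "Qpow psi N (Suc m) eta eta' = (\<Sum>e \<in> parts N. Qpow psi N m eta e * Qgen psi N e eta')"

definition Ptrans :: "(nat \<Rightarrow> nat \<Rightarrow> real) \<Rightarrow> nat \<Rightarrow> real \<Rightarrow> (nat \<Rightarrow> nat) \<Rightarrow> (nat \<Rightarrow> nat) \<Rightarrow> real" where
  "Ptrans psi N t eta eta' = (\<Sum>m. t ^ m / fact m * Qpow psi N m eta eta')"

definition monomers :: "nat \<Rightarrow> (nat \<Rightarrow> nat)" where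
  "monomers N = (\<lambda>k. if k = 1 then N else 0)"

definition single_cluster :: "nat \<Rightarrow> (nat \<Rightarrow> nat)" where
  "single_cluster N = (\<lambda>k. if k = N then 1 else 0)"

definition distCP :: "(nat \<Rightarrow> nat \<Rightarrow> real) \<Rightarrow> nat \<Rightarrow> real \<Rightarrow> (nat \<Rightarrow> nat) \<Rightarrow> real" where
  "distCP psi N t eta = Ptrans psi N t (monomers N) eta"

definition mean_n :: "(nat \<Rightarrow> nat \<Rightarrow> real) \<Rightarrow> nat \<Rightarrow> real \<Rightarrow> nat \<Rightarrow> real" where
  "mean_n psi N t k = (\<Sum>eta \<in> parts N. distCP psi N t eta * real (eta k))"

definition cov_n :: "(nat \<Rightarrow> nat \<Rightarrow> real) \<Rightarrow> nat \<Rightarrow> real \<Rightarrow> nat \<Rightarrow> nat \<Rightarrow> real" where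
  "cov_n psi N t k l = (\<Sum>eta \<in> parts N. distCP psi N t eta * real (eta k) * real (eta l))
                        - mean_n psi N t k * mean_n psi N t l"

definition var_n :: "(nat \<Rightarrow> nat \<Rightarrow> real) \<Rightarrow> nat \<Rightarrow> real \<Rightarrow> nat \<Rightarrow> real" where
  "var_n psi N t k = cov_n psi N t k k"

definition p_coag :: "(nat \<Rightarrow> nat \<Rightarrow> real) \<Rightarrow> nat \<Rightarrow> real \<Rightarrow> real" where
  "p_coag psi N t = distCP psi N t (single_cluster N)"

definition psi_mult :: "nat \<Rightarrow> nat \<Rightarrow> real" where
  "psi_mult i j = 2 * real i * real j"

end

theory Submission
  imports Defs "HOL-Real_Asymp.Real_Asymp"
begin


fun mpow :: "'a set \<Rightarrow> ('a \<Rightarrow> 'a \<Rightarrow> real) \<Rightarrow> nat \<Rightarrow> 'a \<Rightarrow> 'a \<Rightarrow> real" where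
  "mpow S B 0 x y = (if x = y then 1 else 0)"
| "mpow S B (Suc m) x y = (\<Sum>e\<in>S. mpow S B m x e * B e y)"

lemma mpow_bound:
  assumes "finite S" "\<And>e y. e \<in> S \<Longrightarrow> y \<in> S \<Longrightarrow> \<bar>B e y\<bar> \<le> b" "0 \<le> b"
  shows "y \<in> S \<Longrightarrow> \<bar>mpow S B m x y\<bar> \<le> (real (card S) * b) ^ m"
proof (induction m arbitrary: y)
  case 0 then show ?case by simp
next
  case (Suc m)
  have "\<bar>mpow S B (Suc m) x y\<bar> \<le> (\<Sum>e\<in>S. \<bar>mpow S B m x e\<bar> * \<bar>B e y\<bar>)"
    by (simp add: abs_mult[symmetric] sum_abs del: abs_mult)
  also have "\<dots> \<le> (\<Sum>e\<in>S. (real (card S) * b) ^ m * b)"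
    by (rule sum_mono) (intro mult_mono, auto intro: Suc assms simp: assms(3))
  also have "\<dots> = (real (card S) * b) ^ Suc m" by simp
  finally show ?case .
qed

lemma mpow_summable:
  assumes "finite S" "y \<in> S"
  shows "summable (\<lambda>m. \<bar>t ^ m / fact m * mpow S B m x y\<bar>)"
proof -
  define b where "b = (\<Sum>e\<in>S. \<Sum>y\<in>S. \<bar>B e y\<bar>)"
  have bb: "\<bar>B e y\<bar> \<le> b" if "e \<in> S" "y \<in> S" for e y
  proof -
    have "\<bar>B e y\<bar> \<le> (\<Sum>y\<in>S. \<bar>B e y\<bar>)" using that assms(1)
      by (intro member_le_sum) auto
    also have "\<dots> \<le> b" unfolding b_def using that assms(1)
      by (intro member_le_sum[where f="\<lambda>e. \<Sum>y\<in>S. \<bar>B e y\<bar>"]) (auto intro: sum_nonneg)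
    finally show ?thesis .
  qed
  have b0: "0 \<le> b" unfolding b_def by (auto intro: sum_nonneg)
  define C where "C = real (card S) * b"
  have C0: "0 \<le> C" using b0 by (simp add: C_def)
  show ?thesis
  proof (rule summable_comparison_test[where g="\<lambda>m. inverse (fact m) * (\<bar>t\<bar> * C) ^ m"])
    show "summable (\<lambda>m. inverse (fact m) * (\<bar>t\<bar> * C) ^ m)"
      using summable_exp[of "\<bar>t\<bar> * C"] by simp
    show "\<exists>N. \<forall>n\<ge>N. norm \<bar>t ^ n / fact n * mpow S B n x y\<bar> \<le> inverse (fact n) * (\<bar>t\<bar> * C) ^ n"
    proof (intro exI allI impI)
      fix n :: nat
      have "\<bar>mpow S B n x y\<bar> \<le> C ^ n" unfolding C_def
        using mpow_bound[where B=B and b=b, OF assms(1) bb b0 assms(2)] by blast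
      then have "\<bar>t\<bar> ^ n * \<bar>mpow S B n x y\<bar> \<le> \<bar>t\<bar> ^ n * C ^ n"
        by (intro mult_left_mono) auto
      then show "norm \<bar>t ^ n / fact n * mpow S B n x y\<bar> \<le> inverse (fact n) * (\<bar>t\<bar> * C) ^ n"
        by (simp add: abs_mult power_abs divide_inverse power_mult_distrib mult_ac mult_left_mono)
    qed
  qed
qed

lemma mpow_summable':
  assumes "finite S" "y \<in> S"
  shows "summable (\<lambda>m. t ^ m / fact m * mpow S B m x y)"
  by (rule summable_rabs_cancel[OF mpow_summable[OF assms]])

lemma choose_shift_sum:
  fixes f :: "nat \<Rightarrow> real"
  shows "(\<Sum>i\<le>Suc m. real (Suc m choose i) * f i) =
     (\<Sum>i\<le>m. real (m choose i) * f i) + (\<Sum>i\<le>m. real (m choose i) * f (Suc i))"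
proof -
  have "(\<Sum>i\<le>Suc m. real (Suc m choose i) * f i) =
      f 0 + (\<Sum>i\<le>m. real (Suc m choose Suc i) * f (Suc i))"
    by (subst sum.atMost_Suc_shift) simp
  also have "\<dots> = f 0 + (\<Sum>i\<le>m. real (m choose Suc i) * f (Suc i)) + (\<Sum>i\<le>m. real (m choose i) * f (Suc i))"
    by (simp add: sum.distrib algebra_simps)
  also have "f 0 + (\<Sum>i\<le>m. real (m choose Suc i) * f (Suc i)) = (\<Sum>i\<le>Suc m. real (m choose i) * f i)"
    by (subst sum.atMost_Suc_shift) simp
  also have "\<dots> = (\<Sum>i\<le>m. real (m choose i) * f i)" by simp
  finally show ?thesis .
qed

lemma mpow_binomial:
  assumes "finite S"
  shows "y \<in> S \<Longrightarrow> mpow S (\<lambda>e y. K e y + d * (if e = y then 1 else 0)) m x y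
     = (\<Sum>i\<le>m. real (m choose i) * d ^ i * mpow S K (m - i) x y)"
proof (induction m arbitrary: y)
  case 0 then show ?case by simp
next
  case (Suc m)
  let ?K = "\<lambda>e y. K e y + d * (if e = y then 1 else 0)"
  have "mpow S ?K (Suc m) x y = (\<Sum>e\<in>S. mpow S ?K m x e * ?K e y)" by (simp only: mpow.simps)
  also have "\<dots> = (\<Sum>e\<in>S. mpow S ?K m x e * K e y + (if e = y then d * mpow S ?K m x y else 0))"
    by (rule sum.cong) (auto simp: algebra_simps)
  also have "\<dots> = (\<Sum>e\<in>S. mpow S ?K m x e * K e y) + d * mpow S ?K m x y"
    by (simp only: sum.distrib sum.delta[OF assms] Suc.prems if_True)
  also have "(\<Sum>e\<in>S. mpow S ?K m x e * K e y) = (\<Sum>e\<in>S. \<Sum>i\<le>m. real (m choose i) * d ^ i * (mpow S K (m - i) x e * K e y))"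
    by (intro sum.cong refl) (simp add: Suc.IH sum_distrib_left sum_distrib_right mult_ac)
  also have "\<dots> = (\<Sum>i\<le>m. real (m choose i) * (d ^ i * mpow S K (Suc m - i) x y))"
    by (subst sum.swap) (auto simp add: sum_distrib_left Suc_diff_le mult_ac intro!: sum.cong)
  also have "d * mpow S ?K m x y = (\<Sum>i\<le>m. real (m choose i) * (d ^ Suc i * mpow S K (Suc m - Suc i) x y))"
    by (simp add: Suc.IH Suc.prems sum_distrib_left mult_ac)
  finally show ?case
    using choose_shift_sum[of m "\<lambda>i. d ^ i * mpow S K (Suc m - i) x y"] by (simp add: mult_ac)
qed

lemma exp_real_series: "exp (z::real) = (\<Sum>i. z ^ i / fact i)"
  using sums_unique[OF exp_converges[of z]] by (simp add: divide_inverse mult_ac)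

lemma term_identity:
  fixes c t M :: real
  assumes "i \<le> k"
  shows "(-c*t)^i / fact i * (t^(k-i) / fact (k-i) * M) = t^k / fact k * (real (k choose i) * (-c)^i * M)"
proof -
  have tk: "t^k = t^i * t^(k-i)" using assms by (simp add: power_add[symmetric])
  have "(fact k :: real) \<noteq> 0" "(fact i :: real) \<noteq> 0" "(fact (k-i) :: real) \<noteq> 0" by auto
  moreover have p: "(-c*t)^i = (-c)^i * t^i" by (metis mult.commute mult_minus_left power_mult_distrib)
  ultimately show ?thesis
    by (simp add: binomial_fact[OF assms] tk p field_simps)
qed

lemma uniformization:
  assumes "finite S" "y \<in> S"
  shows "(\<Sum>m. t^m / fact m * mpow S B m x y) =
    exp (-c*t) * (\<Sum>m. t^m / fact m * mpow S (\<lambda>e y. B e y + c * (if e = y then 1 else 0)) m x y)"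
proof -
  define K where "K = (\<lambda>e y. B e y + c * (if e = y then 1 else 0))"
  have BK: "B = (\<lambda>e y. K e y + (-c) * (if e = y then 1 else 0))"
    by (auto simp: K_def fun_eq_iff)
  define a where "a = (\<lambda>i. (-c*t)^i / fact i :: real)"
  define b where "b = (\<lambda>n. t^n / fact n * mpow S K n x y)"
  have sa: "summable (\<lambda>k. norm (a k))"
    using summable_norm_exp[of "-c*t"] by (simp add: a_def divide_inverse mult_ac)
  have sb: "summable (\<lambda>k. norm (b k))"
    using mpow_summable[OF assms] by (simp add: b_def)
  have "exp (-c*t) * (\<Sum>m. b m) = (\<Sum>i. a i) * (\<Sum>m. b m)"
    by (simp add: exp_real_series a_def)
  also have "\<dots> = (\<Sum>k. \<Sum>i\<le>k. a i * b (k - i))"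
    by (rule Cauchy_product[OF sa sb])
  also have "\<dots> = (\<Sum>k. t^k / fact k * mpow S B k x y)"
  proof (rule suminf_cong)
    fix k
    have "(\<Sum>i\<le>k. a i * b (k - i)) = (\<Sum>i\<le>k. t^k / fact k * (real (k choose i) * (-c)^i * mpow S K (k - i) x y))"
      by (intro sum.cong refl) (unfold a_def b_def, rule term_identity, simp)
    also have "\<dots> = t^k / fact k * mpow S B k x y"
      by (subst BK, subst mpow_binomial[OF assms(1,2)]) (simp add: sum_distrib_left)
    finally show "(\<Sum>i\<le>k. a i * b (k - i)) = t^k / fact k * mpow S B k x y" .
  qed
  finally show ?thesis by (simp add: b_def K_def)
qed

lemma mpow_nonneg:
  assumes "\<And>e y. e \<in> S \<Longrightarrow> y \<in> S \<Longrightarrow> 0 \<le> K e y"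
  shows "y \<in> S \<Longrightarrow> 0 \<le> mpow S K m x y"
  by (induction m arbitrary: y) (auto intro!: sum_nonneg mult_nonneg_nonneg assms)

lemma mpow_lyap:
  assumes "finite S" "\<And>e y. e \<in> S \<Longrightarrow> y \<in> S \<Longrightarrow> 0 \<le> K e y"
    and "\<And>e. e \<in> S \<Longrightarrow> (\<Sum>y\<in>S. K e y * V y) \<le> \<rho> * V e"
    and "\<And>e. e \<in> S \<Longrightarrow> 0 \<le> V e" "0 \<le> \<rho>" "x \<in> S"
  shows "(\<Sum>y\<in>S. mpow S K m x y * V y) \<le> \<rho> ^ m * V x"
proof (induction m)
  case 0
  have "(\<Sum>y\<in>S. mpow S K 0 x y * V y) = (\<Sum>y\<in>S. if x = y then V y else 0)"
    by (rule sum.cong) auto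
  then show ?case using assms by simp
next
  case (Suc m)
  have "(\<Sum>y\<in>S. mpow S K (Suc m) x y * V y) = (\<Sum>e\<in>S. mpow S K m x e * (\<Sum>y\<in>S. K e y * V y))"
    by (simp add: sum_distrib_left sum_distrib_right mult_ac) (rule sum.swap)
  also have "\<dots> \<le> (\<Sum>e\<in>S. mpow S K m x e * (\<rho> * V e))"
    by (intro sum_mono mult_left_mono assms mpow_nonneg[OF assms(2)]) auto
  also have "\<dots> = \<rho> * (\<Sum>e\<in>S. mpow S K m x e * V e)"
    by (simp add: sum_distrib_left mult_ac)
  also have "\<dots> \<le> \<rho> * (\<rho> ^ m * V x)"
    by (intro mult_left_mono Suc assms)
  finally show ?case by simp
qed

lemma mpow_rowsum:
  assumes "finite S" "\<And>e. e \<in> S \<Longrightarrow> (\<Sum>y\<in>S. B e y) = 0" "x \<in> S"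
  shows "(\<Sum>y\<in>S. mpow S B m x y) = (if m = 0 then 1 else 0)"
proof (cases m)
  case 0 then show ?thesis using assms by (simp add: sum.delta)
next
  case (Suc n)
  have "(\<Sum>y\<in>S. mpow S B (Suc n) x y) = (\<Sum>e\<in>S. mpow S B n x e * (\<Sum>y\<in>S. B e y))"
    by (simp add: sum_distrib_left) (rule sum.swap)
  also have "\<dots> = 0" using assms by simp
  finally show ?thesis using Suc by simp
qed

lemma ctmc_bounds:
  fixes B :: "'a \<Rightarrow> 'a \<Rightarrow> real"
  assumes S: "finite S" and x: "x \<in> S"
    and rows: "\<And>e. e \<in> S \<Longrightarrow> (\<Sum>y\<in>S. B e y) = 0"
    and off: "\<And>e y. e \<in> S \<Longrightarrow> y \<in> S \<Longrightarrow> e \<noteq> y \<Longrightarrow> 0 \<le> B e y"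
    and diag: "\<And>e. e \<in> S \<Longrightarrow> 0 \<le> B e e + c"
    and V0: "\<And>e. e \<in> S \<Longrightarrow> 0 \<le> V e"
    and lyap: "\<And>e. e \<in> S \<Longrightarrow> (\<Sum>y\<in>S. B e y * V y) \<le> - lam * V e"
    and cl: "lam \<le> c" and t: "0 \<le> t"
  defines "P \<equiv> (\<lambda>y. \<Sum>m. t^m / fact m * mpow S B m x y)"
  shows "\<forall>y\<in>S. 0 \<le> P y" "(\<Sum>y\<in>S. P y) = 1" "(\<Sum>y\<in>S. P y * V y) \<le> exp (-lam*t) * V x"
proof -
  define K where "K = (\<lambda>e y. B e y + c * (if e = y then 1 else 0))"
  have K0: "0 \<le> K e y" if "e \<in> S" "y \<in> S" for e y
    using off[OF that] diag[OF that(1)] by (cases "e = y") (auto simp: K_def)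
  have PK: "P y = exp (-c*t) * (\<Sum>m. t^m / fact m * mpow S K m x y)" if "y \<in> S" for y
    unfolding P_def K_def by (rule uniformization[OF S that])
  show "\<forall>y\<in>S. 0 \<le> P y"
  proof
    fix y assume y: "y \<in> S"
    have "0 \<le> (\<Sum>m. t^m / fact m * mpow S K m x y)"
      by (intro suminf_nonneg mpow_summable'[OF S y] mult_nonneg_nonneg divide_nonneg_pos
          mpow_nonneg[OF K0 y]) (auto simp: t)
    then show "0 \<le> P y" by (simp add: PK y)
  qed
  have "(\<Sum>y\<in>S. P y) = (\<Sum>m. \<Sum>y\<in>S. t^m / fact m * mpow S B m x y)"
    unfolding P_def by (rule suminf_sum[symmetric]) (rule mpow_summable'[OF S])
  also have "\<dots> = (\<Sum>m. if m = 0 then 1 else 0)"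
  proof (rule suminf_cong)
    fix m
    have "(\<Sum>y\<in>S. t^m / fact m * mpow S B m x y) = t^m / fact m * (\<Sum>y\<in>S. mpow S B m x y)"
      by (rule sum_distrib_left[symmetric])
    then show "(\<Sum>y\<in>S. t^m / fact m * mpow S B m x y) = (if m = 0 then 1 else 0)"
      by (simp only: mpow_rowsum[OF S rows x]) simp
  qed
  also have "\<dots> = 1" using sums_unique[OF sums_single[of 0 "\<lambda>_. 1::real"]] by simp
  finally show "(\<Sum>y\<in>S. P y) = 1" .
  have KV: "(\<Sum>y\<in>S. K e y * V y) \<le> (c - lam) * V e" if e: "e \<in> S" for e
  proof -
    have "(\<Sum>y\<in>S. K e y * V y) = (\<Sum>y\<in>S. B e y * V y + (if e = y then c * V y else 0))"
      by (rule sum.cong) (auto simp: K_def algebra_simps)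
    also have "\<dots> = (\<Sum>y\<in>S. B e y * V y) + c * V e"
      using e S by (simp add: sum.distrib)
    finally have "(\<Sum>y\<in>S. K e y * V y) = (\<Sum>y\<in>S. B e y * V y) + c * V e" .
    then show ?thesis using lyap[OF e] by (simp add: algebra_simps)
  qed
  have "(\<Sum>y\<in>S. P y * V y) = exp (-c*t) * (\<Sum>y\<in>S. (\<Sum>m. t^m / fact m * mpow S K m x y * V y))"
  proof -
    have "(\<Sum>y\<in>S. P y * V y) = (\<Sum>y\<in>S. exp (-c*t) * (\<Sum>m. t^m / fact m * mpow S K m x y * V y))"
    proof (rule sum.cong[OF refl])
      fix y assume y: "y \<in> S"
      have "(\<Sum>m. t^m / fact m * mpow S K m x y * V y) = (\<Sum>m. t^m / fact m * mpow S K m x y) * V y"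
        by (rule suminf_mult2[OF mpow_summable'[OF S y], symmetric])
      then show "P y * V y = exp (-c*t) * (\<Sum>m. t^m / fact m * mpow S K m x y * V y)"
        using PK[OF y] by simp
    qed
    then show ?thesis by (simp add: sum_distrib_left)
  qed
  also have "(\<Sum>y\<in>S. (\<Sum>m. t^m / fact m * mpow S K m x y * V y)) = (\<Sum>m. \<Sum>y\<in>S. t^m / fact m * mpow S K m x y * V y)"
    by (rule suminf_sum[symmetric]) (rule summable_mult2, rule mpow_summable'[OF S])
  also have "\<dots> \<le> (\<Sum>m. t^m / fact m * ((c - lam) ^ m * V x))"
  proof (rule suminf_le)
    fix m
    have "(\<Sum>y\<in>S. t^m / fact m * mpow S K m x y * V y) = t^m / fact m * (\<Sum>y\<in>S. mpow S K m x y * V y)"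
      by (simp add: sum_distrib_left mult_ac)
    also have "\<dots> \<le> t^m / fact m * ((c - lam) ^ m * V x)"
      by (intro mult_left_mono mpow_lyap[OF S K0 KV V0]) (auto simp: cl x t)
    finally show "(\<Sum>y\<in>S. t^m / fact m * mpow S K m x y * V y) \<le> t^m / fact m * ((c - lam) ^ m * V x)" .
  next
    show "summable (\<lambda>m. \<Sum>y\<in>S. t^m / fact m * mpow S K m x y * V y)"
      by (intro summable_sum summable_mult2 mpow_summable'[OF S])
  next
    show "summable (\<lambda>m. t^m / fact m * ((c - lam) ^ m * V x))"
      using summable_mult2[OF summable_exp[of "t * (c - lam)"], of "V x"]
      by (simp add: power_mult_distrib divide_inverse mult_ac)
  qed
  also have "\<dots> = exp (t * (c - lam)) * V x"
  proof -
    have "(\<Sum>m. t^m / fact m * ((c - lam) ^ m * V x)) = (\<Sum>m. (t * (c - lam))^m / fact m) * V x"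
    proof -
      have sm: "summable (\<lambda>m. (t * (c - lam))^m / fact m)"
        using summable_exp[of "t * (c - lam)"] by (simp add: divide_inverse mult_ac)
      have "(\<Sum>m. (t * (c - lam))^m / fact m) * V x = (\<Sum>m. (t * (c - lam))^m / fact m * V x)"
        by (rule suminf_mult2[OF sm])
      then show ?thesis by (simp add: power_mult_distrib mult_ac)
    qed
    then show ?thesis by (simp add: exp_real_series)
  qed
  finally have "(\<Sum>y\<in>S. P y * V y) \<le> exp (-c*t) * (exp (t * (c - lam)) * V x)"
    by (simp add: mult_left_mono)
  also have "\<dots> = exp (-lam*t) * V x"
    by (simp add: mult.assoc[symmetric] exp_add[symmetric] algebra_simps)
  finally show "(\<Sum>y\<in>S. P y * V y) \<le> exp (-lam*t) * V x" .
qed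



definition ncl :: "nat \<Rightarrow> (nat \<Rightarrow> nat) \<Rightarrow> nat" where
  "ncl N eta = (\<Sum>k=1..N. eta k)"

lemma parts_zero: "eta \<in> parts N \<Longrightarrow> k \<notin> {1..N} \<Longrightarrow> eta k = 0"
  by (auto simp: parts_def)

lemma parts_sum: "eta \<in> parts N \<Longrightarrow> (\<Sum>k=1..N. k * eta k) = N"
  by (auto simp: parts_def)

lemma parts_le: assumes "eta \<in> parts N" shows "eta k \<le> N"
proof (cases "k \<in> {1..N}")
  case True
  have "k * eta k \<le> (\<Sum>k=1..N. k * eta k)"
    by (rule member_le_sum) (use True in auto)
  also have "\<dots> = N" using parts_sum[OF assms] .
  finally have "k * eta k \<le> N" .
  moreover have "eta k \<le> k * eta k" using True by (cases k) auto
  ultimately show ?thesis by linarith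
next
  case False then show ?thesis using parts_zero[OF assms] by simp
qed

lemma finite_parts: "finite (parts N)"
proof (rule finite_subset)
  show "parts N \<subseteq> {f. \<forall>x. (x \<in> {1..N} \<longrightarrow> f x \<in> {0..N}) \<and> (x \<notin> {1..N} \<longrightarrow> f x = 0)}"
    using parts_le parts_zero by auto
  show "finite {f. \<forall>x. (x \<in> {1..N} \<longrightarrow> f x \<in> {0..N}) \<and> (x \<notin> {1..N} \<longrightarrow> f x = (0::nat))}"
    by (rule finite_set_of_finite_funs) auto
qed

lemma single_in_parts: "1 \<le> N \<Longrightarrow> single_cluster N \<in> parts N"
  by (auto simp: parts_def single_cluster_def if_distrib sum.delta cong: if_cong)

lemma monomers_in_parts: "1 \<le> N \<Longrightarrow> monomers N \<in> parts N"
  by (auto simp: parts_def monomers_def if_distrib sum.delta cong: if_cong)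

lemma ncl_monomers: "1 \<le> N \<Longrightarrow> ncl N (monomers N) = N"
  by (auto simp: ncl_def monomers_def sum.delta cong: if_cong)

lemma top_is_single:
  assumes e: "eta \<in> parts N" and N: "1 \<le> N" and top: "1 \<le> eta N"
  shows "eta = single_cluster N"
proof -
  have "N * eta N + (\<Sum>k\<in>{1..N}-{N}. k * eta k) = N"
    using parts_sum[OF e] sum.remove[of "{1..N}" N "\<lambda>k. k * eta k"] N by simp
  moreover have "N * 1 \<le> N * eta N" using top by (rule mult_le_mono2)
  ultimately have a: "N * eta N = N" and rest: "(\<Sum>k\<in>{1..N}-{N}. k * eta k) = 0"
    by linarith+
  from a N have "eta N = 1" by simp
  moreover have "eta k = 0" if "k \<in> {1..N}-{N}" for k
    using rest that by auto
  ultimately show ?thesis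
    using parts_zero[OF e] by (auto simp: single_cluster_def fun_eq_iff)
qed

lemma ncl_bounds:
  assumes e: "eta \<in> parts N" and N: "1 \<le> N"
  shows "1 \<le> ncl N eta" "eta \<noteq> single_cluster N \<Longrightarrow> 2 \<le> ncl N eta"
proof -
  have main: "eta \<noteq> single_cluster N \<Longrightarrow> 2 \<le> ncl N eta"
  proof -
    assume ns: "eta \<noteq> single_cluster N"
    then have z: "eta N = 0" using top_is_single[OF e N] by fastforce
    have "N = (\<Sum>k=1..N. k * eta k)" using parts_sum[OF e] by simp
    also have "\<dots> \<le> (\<Sum>k=1..N. (N - 1) * eta k)"
    proof (rule sum_mono)
      fix k assume k: "k \<in> {1..N}"
      show "k * eta k \<le> (N - 1) * eta k"
        using k z by (cases "k = N") auto
    qed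
    also have "\<dots> = (N - 1) * ncl N eta" by (simp add: ncl_def sum_distrib_left)
    finally have "N \<le> (N - 1) * ncl N eta" .
    show "2 \<le> ncl N eta"
    proof (rule ccontr)
      assume "\<not> 2 \<le> ncl N eta"
      then have "ncl N eta \<le> 1" by simp
      then have "(N - 1) * ncl N eta \<le> (N - 1) * 1" by (rule mult_le_mono2)
      then have "(N - 1) * ncl N eta \<le> N - 1" by simp
      with \<open>N \<le> (N - 1) * ncl N eta\<close> N show False by linarith
    qed
  qed
  show "eta \<noteq> single_cluster N \<Longrightarrow> 2 \<le> ncl N eta" by (rule main)
  show "1 \<le> ncl N eta"
  proof (cases "eta = single_cluster N")
    case True
    then show ?thesis using N by (simp add: ncl_def single_cluster_def sum.delta)
  next
    case False then show ?thesis using main by simp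
  qed
qed

lemma top_value:
  assumes e: "eta \<in> parts N" and N: "1 \<le> N"
  shows "eta N = (if eta = single_cluster N then 1 else 0)"
proof (cases "eta = single_cluster N")
  case True then show ?thesis by (simp add: single_cluster_def)
next
  case False then show ?thesis using top_is_single[OF e N] by fastforce
qed

lemma merge_props:
  assumes e: "eta \<in> parts N" and i: "1 \<le> i" and ij: "i \<le> j" and jN: "j \<le> N"
    and r: "pair_rate psi_mult eta i j \<noteq> 0"
  shows "merge eta i j \<in> parts N" "merge eta i j \<noteq> eta"
    "real (ncl N (merge eta i j)) = real (ncl N eta) - 1"
proof -
  have ei: "1 \<le> eta i" and ej: "1 \<le> eta j" and eii: "i = j \<Longrightarrow> 2 \<le> eta i"
    using r by (auto simp: pair_rate_def psi_mult_def split: if_splits)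
  have mv: "real (merge eta i j k) = real (eta k) - (if k = i then 1 else 0) - (if k = j then 1 else 0)
      + (if k = i + j then 1 else 0)" for k
    using i ij ei ej eii by (cases "i = j") (auto simp: merge_def Let_def of_nat_diff)
  have ijN: "i + j \<le> N"
  proof (cases "i = j")
    case True
    have "i * eta i \<le> (\<Sum>k=1..N. k * eta k)"
      by (rule member_le_sum) (use i ij jN in auto)
    then have "i * eta i \<le> N" using parts_sum[OF e] by simp
    moreover have "i * 2 \<le> i * eta i" using eii[OF True] by (rule mult_le_mono2)
    ultimately show ?thesis using True by linarith
  next
    case False
    have "(\<Sum>k\<in>{i,j}. k * eta k) \<le> (\<Sum>k=1..N. k * eta k)"
      by (rule sum_mono2) (use i ij jN in auto)
    then have "i * eta i + j * eta j \<le> N" using parts_sum[OF e] False by simp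
    moreover have "i * 1 \<le> i * eta i" using ei by (rule mult_le_mono2)
    moreover have "j * 1 \<le> j * eta j" using ej by (rule mult_le_mono2)
    ultimately show ?thesis by linarith
  qed
  have inI: "i \<in> {1..N}" "j \<in> {1..N}" "i + j \<in> {1..N}" using i ij jN ijN by auto
  have "(\<Sum>k=1..N. real k * real (merge eta i j k)) =
     (\<Sum>k=1..N. real k * real (eta k)) - (\<Sum>k=1..N. if k = i then real k else 0)
      - (\<Sum>k=1..N. if k = j then real k else 0) + (\<Sum>k=1..N. if k = i + j then real k else 0)"
  proof -
    have pk: "real k * real (merge eta i j k) = real k * real (eta k) - (if k = i then real k else 0)
      - (if k = j then real k else 0) + (if k = i + j then real k else 0)" for k
      by (simp add: mv algebra_simps)
    show ?thesis by (simp only: pk sum.distrib sum_subtractf)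
  qed
  also have "\<dots> = real N"
  proof -
    have "real (\<Sum>k=1..N. k * eta k) = real N" using parts_sum[OF e] by simp
    then have rs: "(\<Sum>k=1..N. real k * real (eta k)) = real N" by (simp add: of_nat_sum)
    show ?thesis using inI rs by simp
  qed
  finally have "real (\<Sum>k=1..N. k * merge eta i j k) = real N" by simp
  then have msum: "(\<Sum>k=1..N. k * merge eta i j k) = N" by (simp only: of_nat_eq_iff)
  have msupp: "merge eta i j k \<noteq> 0 \<Longrightarrow> 1 \<le> k \<and> k \<le> N" for k
  proof (rule ccontr)
    assume a: "merge eta i j k \<noteq> 0" "\<not> (1 \<le> k \<and> k \<le> N)"
    then have "k \<notin> {1..N}" by auto
    then have "k \<noteq> i" "k \<noteq> j" "k \<noteq> i + j" "eta k = 0" using inI parts_zero[OF e] by auto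
    then have "real (merge eta i j k) = 0" by (simp add: mv)
    with a show False by simp
  qed
  show "merge eta i j \<in> parts N" using msum msupp by (auto simp: parts_def)
  have "real (merge eta i j (i + j)) = real (eta (i + j)) + 1" using i ij by (simp add: mv)
  then show "merge eta i j \<noteq> eta" by auto
  have "real (ncl N (merge eta i j)) = (\<Sum>k=1..N. real (eta k)) - (\<Sum>k=1..N. if k = i then 1 else 0)
      - (\<Sum>k=1..N. if k = j then 1 else 0) + (\<Sum>k=1..N. if k = i + j then 1 else 0)"
    by (simp only: ncl_def of_nat_sum mv sum.distrib sum_subtractf)
  also have "\<dots> = real (ncl N eta) - 1" using inI by (simp add: ncl_def)
  finally show "real (ncl N (merge eta i j)) = real (ncl N eta) - 1" .
qed

lemma parts_sum_real: "eta \<in> parts N \<Longrightarrow> (\<Sum>k=1..N. real k * real (eta k)) = real N"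
proof -
  assume e: "eta \<in> parts N"
  have "real (\<Sum>k=1..N. k * eta k) = real N" using parts_sum[OF e] by simp
  then show ?thesis by (simp add: of_nat_sum)
qed

lemma sym_split:
  fixes g :: "nat \<Rightarrow> nat \<Rightarrow> real" and d :: "nat \<Rightarrow> real"
  assumes sym: "\<And>i j. g i j = g j i"
  shows "2 * (\<Sum>i=1..n. \<Sum>j=i..n. (if i = j then d i else g i j)) =
    (\<Sum>i=1..n. \<Sum>j=1..n. g i j) - (\<Sum>i=1..n. g i i) + 2 * (\<Sum>i=1..n. d i)"
proof (induction n)
  case 0 then show ?case by simp
next
  case (Suc n)
  let ?h = "\<lambda>i j. if i = j then d i else g i j"
  have L: "(\<Sum>i=1..Suc n. \<Sum>j=i..Suc n. ?h i j) = (\<Sum>i=1..n. \<Sum>j=i..n. ?h i j) + (\<Sum>i=1..n. g i (Suc n)) + d (Suc n)"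
  proof -
    have "(\<Sum>i=1..Suc n. \<Sum>j=i..Suc n. ?h i j) = (\<Sum>i=1..n. \<Sum>j=i..Suc n. ?h i j) + d (Suc n)"
      by (simp add: sum.cl_ivl_Suc)
    also have "(\<Sum>i=1..n. \<Sum>j=i..Suc n. ?h i j) = (\<Sum>i=1..n. (\<Sum>j=i..n. ?h i j) + g i (Suc n))"
      by (rule sum.cong) (auto simp: sum.cl_ivl_Suc)
    finally show ?thesis by (simp add: sum.distrib)
  qed
  have R: "(\<Sum>i=1..Suc n. \<Sum>j=1..Suc n. g i j) = (\<Sum>i=1..n. \<Sum>j=1..n. g i j) + 2 * (\<Sum>i=1..n. g i (Suc n)) + g (Suc n) (Suc n)"
  proof -
    have "(\<Sum>i=1..Suc n. \<Sum>j=1..Suc n. g i j) = (\<Sum>i=1..Suc n. (\<Sum>j=1..n. g i j) + g i (Suc n))"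
      by (simp add: sum.cl_ivl_Suc)
    also have "\<dots> = (\<Sum>i=1..n. \<Sum>j=1..n. g i j) + (\<Sum>j=1..n. g (Suc n) j) + (\<Sum>i=1..n. g i (Suc n)) + g (Suc n) (Suc n)"
      by (simp add: sum.distrib sum.cl_ivl_Suc)
    also have "(\<Sum>j=1..n. g (Suc n) j) = (\<Sum>i=1..n. g i (Suc n))" by (simp add: sym)
    finally show ?thesis by simp
  qed
  have e1: "(\<Sum>i=1..Suc n. g i i) = (\<Sum>i=1..n. g i i) + g (Suc n) (Suc n)" by simp
  have e2: "(\<Sum>i=1..Suc n. d i) = (\<Sum>i=1..n. d i) + d (Suc n)" by simp
  show ?case unfolding L R e1 e2 using Suc.IH by (simp add: algebra_simps)
qed

lemma rate_lower:
  assumes i: "1 \<le> i" and j: "1 \<le> j"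
  shows "(if i = j then real i * real (eta i) * (real (eta i) - 1)
          else (real i + real j) * real (eta i) * real (eta j)) \<le> pair_rate psi_mult eta i j"
proof (cases "i = j")
  case True
  have X: "0 \<le> real (eta i) * (real (eta i) - 1)" by (cases "eta i") auto
  have ii: "real i \<le> real i * real i" using i by (simp add: mult_le_cancel_left1)
  have "real i * (real (eta i) * (real (eta i) - 1)) \<le> (real i * real i) * (real (eta i) * (real (eta i) - 1))"
    by (rule mult_right_mono[OF ii X])
  moreover have "pair_rate psi_mult eta i j = (real i * real i) * (real (eta i) * (real (eta i) - 1))"
    using True by (simp add: pair_rate_def psi_mult_def)
  moreover have "(if i = j then real i * real (eta i) * (real (eta i) - 1)
          else (real i + real j) * real (eta i) * real (eta j)) = real i * (real (eta i) * (real (eta i) - 1))"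
    using True by simp
  ultimately show ?thesis by simp
next
  case False
  have "0 \<le> (real i - 1) * (real j - 1)" using i j by simp
  moreover have "1 \<le> real i * real j" using i j by (metis mult_le_mono of_nat_1 of_nat_le_iff of_nat_mult nat_mult_1)
  ultimately have ij: "real i + real j \<le> 2 * real i * real j" by (simp add: algebra_simps)
  have "(real i + real j) * (real (eta i) * real (eta j)) \<le> (2 * real i * real j) * (real (eta i) * real (eta j))"
    by (rule mult_right_mono[OF ij]) simp
  then show ?thesis using False by (simp add: pair_rate_def psi_mult_def mult_ac)
qed

lemma rate_sum_lower:
  assumes e: "eta \<in> parts N"
  shows "real N * (real (ncl N eta) - 1) \<le> (\<Sum>(i,j)\<in>(SIGMA i:{1..N}. {i..N}). pair_rate psi_mult eta i j)"
proof -
  define er where "er = (\<lambda>k. real (eta k))"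
  define g where "g = (\<lambda>i j. (real i + real j) * er i * er j)"
  define d where "d = (\<lambda>i. real i * er i * (er i - 1))"
  define h where "h = (\<lambda>i j. if i = j then d i else g i j)"
  have m: "(\<Sum>k=1..N. er k) = real (ncl N eta)" by (simp add: er_def ncl_def)
  have Nr: "(\<Sum>k=1..N. real k * er k) = real N" using parts_sum_real[OF e] by (simp add: er_def)
  have "(\<Sum>(i,j)\<in>(SIGMA i:{1..N}. {i..N}). h i j) \<le> (\<Sum>(i,j)\<in>(SIGMA i:{1..N}. {i..N}). pair_rate psi_mult eta i j)"
  proof (rule sum_mono)
    fix p assume "p \<in> (SIGMA i:{1..N}. {i..N})"
    then obtain i j where p: "p = (i,j)" "1 \<le> i" "i \<le> j" by auto
    have "h i j \<le> pair_rate psi_mult eta i j"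
      using rate_lower[of i j eta] p by (auto simp: h_def g_def d_def er_def split: if_split_asm)
    then show "(case p of (i,j) \<Rightarrow> h i j) \<le> (case p of (i,j) \<Rightarrow> pair_rate psi_mult eta i j)"
      using p by simp
  qed
  moreover have "(\<Sum>(i,j)\<in>(SIGMA i:{1..N}. {i..N}). h i j) = (\<Sum>i=1..N. \<Sum>j=i..N. h i j)"
    by (rule sum.Sigma[symmetric]) auto
  moreover have "2 * (\<Sum>i=1..N. \<Sum>j=i..N. h i j) = (\<Sum>i=1..N. \<Sum>j=1..N. g i j) - (\<Sum>i=1..N. g i i) + 2 * (\<Sum>i=1..N. d i)"
    unfolding h_def by (rule sym_split) (simp add: g_def algebra_simps)
  moreover have "(\<Sum>i=1..N. \<Sum>j=1..N. g i j) = 2 * real N * real (ncl N eta)"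
  proof -
    have "(\<Sum>i=1..N. \<Sum>j=1..N. g i j) = (\<Sum>i=1..N. real i * er i * (\<Sum>j=1..N. er j) + er i * (\<Sum>j=1..N. real j * er j))"
      by (simp add: g_def sum_distrib_left sum.distrib algebra_simps)
    also have "\<dots> = (\<Sum>i=1..N. real i * er i) * (\<Sum>j=1..N. er j) + (\<Sum>i=1..N. er i) * (\<Sum>j=1..N. real j * er j)"
      by (simp add: sum.distrib sum_distrib_right)
    also have "\<dots> = 2 * real N * real (ncl N eta)"
      unfolding m Nr by simp
    finally show ?thesis .
  qed
  moreover have "- (\<Sum>i=1..N. g i i) + 2 * (\<Sum>i=1..N. d i) = - 2 * real N"
  proof -
    have "- (\<Sum>i=1..N. g i i) + 2 * (\<Sum>i=1..N. d i) = (\<Sum>i=1..N. - 2 * (real i * er i))"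
      by (simp add: g_def d_def sum_distrib_left sum_negf[symmetric] sum.distrib[symmetric] algebra_simps)
    also have "\<dots> = - 2 * (\<Sum>i=1..N. real i * er i)" by (simp only: sum_distrib_left)
    also have "\<dots> = - 2 * real N" unfolding Nr ..
    finally show ?thesis .
  qed
  ultimately show ?thesis by (simp add: algebra_simps)
qed

lemma QV:
  assumes e: "eta \<in> parts N" and N: "1 \<le> N"
  shows "(\<Sum>y\<in>parts N. Qgen psi_mult N eta y * (real (ncl N y) - 1)) \<le> - real N * (real (ncl N eta) - 1)"
proof -
  define S where "S = parts N"
  define Sg where "Sg = (SIGMA i:{1..N}. {i..N})"
  define V where "V = (\<lambda>y. real (ncl N y) - 1)"
  define R where "R = (\<lambda>p. pair_rate psi_mult eta (fst p) (snd p))"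
  define M where "M = (\<lambda>p. merge eta (fst p) (snd p))"
  define W where "W = (\<lambda>y. V y - V eta)"
  have fS: "finite S" by (simp add: S_def finite_parts)
  have fSg: "finite Sg" by (simp add: Sg_def)
  have eS: "eta \<in> S" using e by (simp add: S_def)
  have Qo: "Qoff psi_mult N eta y = (\<Sum>p\<in>Sg. if M p = y then R p else 0)" for y
    unfolding Qoff_def Sg_def M_def R_def by (simp add: split_def)
  have "(\<Sum>y\<in>S. Qgen psi_mult N eta y * V y) = Qgen psi_mult N eta eta * V eta + (\<Sum>y\<in>S-{eta}. Qgen psi_mult N eta y * V y)"
    by (rule sum.remove[OF fS eS])
  also have "(\<Sum>y\<in>S-{eta}. Qgen psi_mult N eta y * V y) = (\<Sum>y\<in>S-{eta}. Qoff psi_mult N eta y * V y)"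
    by (rule sum.cong) (auto simp: Qgen_def)
  also have "Qgen psi_mult N eta eta = - (\<Sum>y\<in>S-{eta}. Qoff psi_mult N eta y)"
    by (simp add: Qgen_def S_def)
  finally have A: "(\<Sum>y\<in>S. Qgen psi_mult N eta y * V y) = - (\<Sum>y\<in>S-{eta}. Qoff psi_mult N eta y) * V eta + (\<Sum>y\<in>S-{eta}. Qoff psi_mult N eta y * V y)" .
  have B: "(\<Sum>y\<in>S-{eta}. Qoff psi_mult N eta y * W y) = (\<Sum>y\<in>S-{eta}. Qoff psi_mult N eta y * V y) - (\<Sum>y\<in>S-{eta}. Qoff psi_mult N eta y) * V eta"
    by (simp add: W_def right_diff_distrib sum_subtractf sum_distrib_right)
  have st1: "(\<Sum>y\<in>S. Qgen psi_mult N eta y * V y) = (\<Sum>y\<in>S-{eta}. Qoff psi_mult N eta y * W y)"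
    unfolding A B by simp
  have "(\<Sum>y\<in>S-{eta}. Qoff psi_mult N eta y * W y) = (\<Sum>y\<in>S-{eta}. \<Sum>p\<in>Sg. if M p = y then R p * W y else 0)"
    unfolding Qo sum_distrib_right by (intro sum.cong refl) simp
  also have "\<dots> = (\<Sum>p\<in>Sg. \<Sum>y\<in>S-{eta}. if M p = y then R p * W y else 0)"
    by (rule sum.swap)
  also have "\<dots> = (\<Sum>p\<in>Sg. if M p \<in> S-{eta} then R p * W (M p) else 0)"
    using fS by (simp add: sum.delta')
  also have "\<dots> = (\<Sum>p\<in>Sg. - R p)"
  proof (rule sum.cong[OF refl])
    fix p assume p: "p \<in> Sg"
    then obtain i j where ij: "p = (i,j)" "1 \<le> i" "i \<le> j" "j \<le> N" by (auto simp: Sg_def)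
    show "(if M p \<in> S-{eta} then R p * W (M p) else 0) = - R p"
    proof (cases "R p = 0")
      case True then show ?thesis by simp
    next
      case False
      then have r: "pair_rate psi_mult eta i j \<noteq> 0" by (simp add: R_def ij)
      note mp = merge_props[OF e ij(2,3,4) r]
      have "M p \<in> S-{eta}" using mp by (simp add: M_def ij S_def)
      moreover have "W (M p) = -1" using mp by (simp add: W_def V_def M_def ij)
      ultimately show ?thesis by simp
    qed
  qed
  also have "\<dots> = - (\<Sum>(i,j)\<in>Sg. pair_rate psi_mult eta i j)"
    by (simp add: sum_negf R_def split_def)
  finally have "(\<Sum>y\<in>S. Qgen psi_mult N eta y * V y) = - (\<Sum>(i,j)\<in>Sg. pair_rate psi_mult eta i j)"
    using st1 by simp
  also have "\<dots> \<le> - (real N * (real (ncl N eta) - 1))"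
    using rate_sum_lower[OF e] by (simp add: Sg_def)
  finally show ?thesis by (simp add: S_def V_def)
qed



lemma Qpow_mpow: "Qpow psi N m x y = mpow (parts N) (Qgen psi N) m x y"
  by (induction m arbitrary: y) auto

lemma pair_rate_nonneg: "0 \<le> pair_rate psi_mult eta i j"
proof -
  have "0 \<le> real (eta i) * (real (eta i) - 1)" by (cases "eta i") auto
  then have X: "0 \<le> (real i * real i) * (real (eta i) * (real (eta i) - 1))" by simp
  show ?thesis
  proof (cases "i = j")
    case True
    have "pair_rate psi_mult eta i j = (real i * real i) * (real (eta i) * (real (eta i) - 1))"
      using True by (simp add: pair_rate_def psi_mult_def)
    then show ?thesis using X by simp
  next
    case False then show ?thesis by (simp add: pair_rate_def psi_mult_def)
  qed
qed

lemma Qoff_nonneg: "0 \<le> Qoff psi_mult N eta y"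
  unfolding Qoff_def by (intro sum_nonneg) (auto simp: pair_rate_nonneg)

lemma chain_facts:
  assumes N: "1 \<le> N" and t: "0 \<le> t"
  shows "\<forall>y\<in>parts N. 0 \<le> distCP psi_mult N t y"
    "(\<Sum>y\<in>parts N. distCP psi_mult N t y) = 1"
    "(\<Sum>y\<in>parts N. distCP psi_mult N t y * (real (ncl N y) - 1)) \<le> exp (- real N * t) * (real N - 1)"
proof -
  define S where "S = parts N"
  define c where "c = real N + (\<Sum>e\<in>S. \<bar>Qgen psi_mult N e e\<bar>)"
  have fS: "finite S" by (simp add: S_def finite_parts)
  have xS: "monomers N \<in> S" using monomers_in_parts[OF N] by (simp add: S_def)
  have D: "distCP psi_mult N t y = (\<Sum>m. t^m / fact m * mpow S (Qgen psi_mult N) m (monomers N) y)" for y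
    by (simp add: distCP_def Ptrans_def Qpow_mpow S_def)
  have rows: "(\<Sum>y\<in>S. Qgen psi_mult N e y) = 0" if e: "e \<in> S" for e
  proof -
    have "(\<Sum>y\<in>S. Qgen psi_mult N e y) = Qgen psi_mult N e e + (\<Sum>y\<in>S-{e}. Qgen psi_mult N e y)"
      by (rule sum.remove[OF fS e])
    also have "(\<Sum>y\<in>S-{e}. Qgen psi_mult N e y) = (\<Sum>y\<in>S-{e}. Qoff psi_mult N e y)"
      by (rule sum.cong) (auto simp: Qgen_def)
    finally show ?thesis by (simp add: Qgen_def S_def)
  qed
  have off: "0 \<le> Qgen psi_mult N e y" if "e \<noteq> y" for e y
    using that by (simp add: Qgen_def Qoff_nonneg)
  have diag: "0 \<le> Qgen psi_mult N e e + c" if e: "e \<in> S" for e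
  proof -
    have "\<bar>Qgen psi_mult N e e\<bar> \<le> (\<Sum>e\<in>S. \<bar>Qgen psi_mult N e e\<bar>)"
      by (rule member_le_sum) (use e fS in auto)
    then show ?thesis by (simp add: c_def)
  qed
  have V0: "0 \<le> real (ncl N e) - 1" if "e \<in> S" for e
    using ncl_bounds(1)[of e N] that N by (simp add: S_def)
  have lyap: "(\<Sum>y\<in>S. Qgen psi_mult N e y * (real (ncl N y) - 1)) \<le> - real N * (real (ncl N e) - 1)"
    if "e \<in> S" for e
    using QV[of e N] that N by (simp add: S_def)
  have cl: "real N \<le> c" by (simp add: c_def sum_nonneg)
  note cb = ctmc_bounds[OF fS xS rows off diag V0 lyap cl t]
  show "\<forall>y\<in>parts N. 0 \<le> distCP psi_mult N t y" using cb(1) by (simp add: D S_def)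
  show "(\<Sum>y\<in>parts N. distCP psi_mult N t y) = 1" using cb(2) by (simp add: D S_def)
  show "(\<Sum>y\<in>parts N. distCP psi_mult N t y * (real (ncl N y) - 1)) \<le> exp (- real N * t) * (real N - 1)"
    using cb(3) N by (simp add: D S_def ncl_monomers)
qed

lemma per_N:
  assumes N: "1 \<le> N" and t: "0 \<le> t"
  shows "0 \<le> 1 - p_coag psi_mult N t" "1 - p_coag psi_mult N t \<le> real N * exp (- real N * t)"
    "1 - p_coag psi_mult N t \<le> 1"
    "k \<noteq> N \<Longrightarrow> 0 \<le> mean_n psi_mult N t k \<and> mean_n psi_mult N t k \<le> real N * (1 - p_coag psi_mult N t)"
    "k \<noteq> N \<Longrightarrow> l \<noteq> N \<Longrightarrow> 0 \<le> (\<Sum>eta \<in> parts N. distCP psi_mult N t eta * real (eta k) * real (eta l))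
       \<and> (\<Sum>eta \<in> parts N. distCP psi_mult N t eta * real (eta k) * real (eta l)) \<le> real N * real N * (1 - p_coag psi_mult N t)"
    "mean_n psi_mult N t N = p_coag psi_mult N t"
proof -
  define S where "S = parts N"
  define P where "P = distCP psi_mult N t"
  define sg where "sg = single_cluster N"
  define \<delta> where "\<delta> = 1 - p_coag psi_mult N t"
  have fS: "finite S" by (simp add: S_def finite_parts)
  have sgS: "sg \<in> S" using single_in_parts[OF N] by (simp add: S_def sg_def)
  note cf = chain_facts[OF N t]
  have P0: "0 \<le> P y" if "y \<in> S" for y using cf(1) that by (simp add: P_def S_def)
  have "1 = P sg + (\<Sum>y\<in>S-{sg}. P y)"
    using cf(2) sum.remove[OF fS sgS, of P] by (simp add: P_def S_def)
  then have rest: "(\<Sum>y\<in>S-{sg}. P y) = \<delta>"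
    by (simp add: \<delta>_def p_coag_def P_def sg_def)
  show "0 \<le> 1 - p_coag psi_mult N t"
  proof -
    have "0 \<le> (\<Sum>y\<in>S-{sg}. P y)" by (rule sum_nonneg) (auto intro: P0)
    then show ?thesis using rest by (simp add: \<delta>_def)
  qed
  show "1 - p_coag psi_mult N t \<le> 1"
    using P0[OF sgS] by (simp add: p_coag_def P_def sg_def)
  define V where "V = (\<lambda>y. real (ncl N y) - 1)"
  have "\<delta> \<le> (\<Sum>y\<in>S-{sg}. P y * V y)"
    unfolding rest[symmetric]
  proof (rule sum_mono)
    fix y assume y: "y \<in> S-{sg}"
    have "2 \<le> ncl N y" using ncl_bounds(2)[of y N] y N by (simp add: S_def sg_def)
    then have "1 \<le> V y" by (simp add: V_def)
    then show "P y \<le> P y * V y" using P0[of y] y by (simp add: mult_le_cancel_left1)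
  qed
  also have "\<dots> \<le> P sg * V sg + (\<Sum>y\<in>S-{sg}. P y * V y)"
    using P0[OF sgS] ncl_bounds(1)[of sg N] sgS N by (simp add: V_def S_def)
  also have "\<dots> = (\<Sum>y\<in>S. P y * V y)" by (rule sum.remove[OF fS sgS, symmetric])
  also have "\<dots> \<le> exp (- real N * t) * (real N - 1)"
    using cf(3) by (simp add: P_def S_def V_def)
  also have "\<dots> \<le> real N * exp (- real N * t)" by simp
  finally show "1 - p_coag psi_mult N t \<le> real N * exp (- real N * t)" by (simp add: \<delta>_def)
  have sgk: "sg k = 0" if "k \<noteq> N" for k using that by (simp add: sg_def single_cluster_def)
  show "k \<noteq> N \<Longrightarrow> 0 \<le> mean_n psi_mult N t k \<and> mean_n psi_mult N t k \<le> real N * (1 - p_coag psi_mult N t)"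
  proof -
    assume k: "k \<noteq> N"
    have m: "mean_n psi_mult N t k = (\<Sum>y\<in>S-{sg}. P y * real (y k))"
      using sum.remove[OF fS sgS, of "\<lambda>y. P y * real (y k)"] sgk[OF k]
      by (simp add: mean_n_def P_def S_def)
    have "(\<Sum>y\<in>S-{sg}. P y * real (y k)) \<le> (\<Sum>y\<in>S-{sg}. P y * real N)"
      by (rule sum_mono) (use P0 parts_le in \<open>auto simp: S_def intro!: mult_left_mono\<close>)
    also have "\<dots> = real N * \<delta>" by (subst sum_distrib_right[symmetric]) (simp add: rest mult.commute)
    finally show ?thesis using m P0 by (auto simp: \<delta>_def intro!: sum_nonneg)
  qed
  show "k \<noteq> N \<Longrightarrow> l \<noteq> N \<Longrightarrow> 0 \<le> (\<Sum>eta \<in> parts N. distCP psi_mult N t eta * real (eta k) * real (eta l))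
       \<and> (\<Sum>eta \<in> parts N. distCP psi_mult N t eta * real (eta k) * real (eta l)) \<le> real N * real N * (1 - p_coag psi_mult N t)"
  proof -
    assume k: "k \<noteq> N" and l: "l \<noteq> N"
    have m: "(\<Sum>eta \<in> parts N. distCP psi_mult N t eta * real (eta k) * real (eta l)) = (\<Sum>y\<in>S-{sg}. P y * (real (y k) * real (y l)))"
      using sum.remove[OF fS sgS, of "\<lambda>y. P y * (real (y k) * real (y l))"] sgk[OF k]
      by (simp add: P_def S_def mult_ac)
    have "(\<Sum>y\<in>S-{sg}. P y * (real (y k) * real (y l))) \<le> (\<Sum>y\<in>S-{sg}. P y * (real N * real N))"
      by (rule sum_mono) (use P0 parts_le in \<open>auto simp: S_def intro!: mult_left_mono mult_mono\<close>)
    also have "\<dots> = real N * real N * \<delta>" by (subst sum_distrib_right[symmetric]) (simp add: rest mult.commute)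
    finally show ?thesis using m P0 by (auto simp: \<delta>_def intro!: sum_nonneg)
  qed
  have "mean_n psi_mult N t N = (\<Sum>y\<in>S. if y = sg then P y else 0)"
    unfolding mean_n_def
    by (rule sum.cong) (auto simp: S_def P_def sg_def top_value[OF _ N])
  also have "\<dots> = P sg" using fS sgS by simp
  finally show "mean_n psi_mult N t N = p_coag psi_mult N t" by (simp add: p_coag_def P_def sg_def)
qed



lemma arith1:
  fixes x E :: real assumes x: "1 \<le> x" and E: "0 \<le> E"
  shows "x * E \<le> 2 * x^3 * E" "x * (x * E) \<le> 2 * x^3 * E"
proof -
  have xx: "x \<le> x * x" using x by (simp add: mult_le_cancel_left1)
  have "x * x \<le> x * x * x" using x by (simp add: mult_le_cancel_left1)
  then have x3: "x * x \<le> x^3" by (simp add: power3_eq_cube)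
  have "x \<le> x^3" using xx x3 by linarith
  then have "x * E \<le> x^3 * E" by (rule mult_right_mono[OF _ E])
  moreover have "0 \<le> x^3 * E" using x E by simp
  ultimately show "x * E \<le> 2 * x^3 * E" by linarith
  have "x * x * E \<le> x^3 * E" by (rule mult_right_mono[OF x3 E])
  moreover have "0 \<le> x^3 * E" using x E by simp
  ultimately show "x * (x * E) \<le> 2 * x^3 * E" by (simp add: mult.assoc)
qed

lemma cov_arith:
  fixes x E s a b d :: real
  assumes x: "1 \<le> x" and E: "0 \<le> E" and s: "0 \<le> s" "s \<le> x * x * d"
    and a: "0 \<le> a" "a \<le> x * d" and b: "0 \<le> b" "b \<le> x * d"
    and d: "0 \<le> d" "d \<le> 1" "d \<le> x * E"
  shows "\<bar>s - a * b\<bar> \<le> 2 * x^3 * E"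
proof -
  have "a * b \<le> (x * d) * (x * d)" by (rule mult_mono) (use a b x d in auto)
  also have "\<dots> = x * x * (d * d)" by (simp add: mult_ac)
  also have "\<dots> \<le> x * x * d"
  proof -
    have "d * d \<le> d * 1" using d by (intro mult_left_mono) auto
    then show ?thesis using x by (intro mult_left_mono) auto
  qed
  finally have ab: "a * b \<le> x * x * d" .
  have ab0: "0 \<le> a * b" using a b by simp
  have "\<bar>s - a * b\<bar> \<le> 2 * (x * x * d)" using ab ab0 s by linarith
  also have "\<dots> \<le> 2 * (x * x * (x * E))" using d x by (intro mult_left_mono) auto
  also have "\<dots> = 2 * x^3 * E" by (simp add: power3_eq_cube mult_ac)
  finally show ?thesis .
qed

lemma squeeze0:
  fixes q g :: "nat \<Rightarrow> real"
  assumes "eventually (\<lambda>N. \<bar>q N\<bar> \<le> g N) sequentially" "g \<longlonglongrightarrow> 0"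
  shows "q \<longlonglongrightarrow> 0"
proof (rule tendsto_sandwich[of "\<lambda>N. - g N" _ _ g])
  show "\<forall>\<^sub>F n in sequentially. - g n \<le> q n" using assms(1) by eventually_elim linarith
  show "\<forall>\<^sub>F n in sequentially. q n \<le> g n" using assms(1) by eventually_elim linarith
  show "(\<lambda>N. - g N) \<longlonglongrightarrow> 0" using tendsto_minus[OF assms(2)] by simp
qed (rule assms(2))

theorem mainTheorem7:
  fixes t :: real and k l :: nat
  assumes "t > 0" and "k \<noteq> l"
  shows "(\<lambda>N. mean_n psi_mult N t k) \<longlonglongrightarrow> 0
    \<and> (\<lambda>N. var_n psi_mult N t k) \<longlonglongrightarrow> 0
    \<and> (\<lambda>N. cov_n psi_mult N t k l) \<longlonglongrightarrow> 0
    \<and> (\<lambda>N. mean_n psi_mult N t N) \<longlonglongrightarrow> 1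
    \<and> (\<lambda>N. p_coag psi_mult N t) \<longlonglongrightarrow> 1"
proof -
  have t0: "0 \<le> t" using assms(1) by simp
  define g where "g = (\<lambda>N::nat. 2 * real N ^ 3 * exp (- real N * t))"
  have glim: "g \<longlonglongrightarrow> 0" unfolding g_def using assms(1) by real_asymp
  have ev: "eventually (\<lambda>N. Suc (max k l) \<le> N) sequentially" by (rule eventually_ge_at_top)
  have B: "\<bar>mean_n psi_mult N t k\<bar> \<le> g N \<and> \<bar>cov_n psi_mult N t k k\<bar> \<le> g N \<and> \<bar>cov_n psi_mult N t k l\<bar> \<le> g N
      \<and> \<bar>mean_n psi_mult N t N - 1\<bar> \<le> g N \<and> \<bar>p_coag psi_mult N t - 1\<bar> \<le> g N"
    if N: "Suc (max k l) \<le> N" for N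
  proof -
    have N1: "1 \<le> N" and kN: "k \<noteq> N" and lN: "l \<noteq> N" using N by auto
    have x: "1 \<le> real N" using N1 by simp
    have E: "0 \<le> exp (- real N * t)" by simp
    note pn = per_N[OF N1 t0]
    have d1: "0 \<le> 1 - p_coag psi_mult N t" and d2: "1 - p_coag psi_mult N t \<le> real N * exp (- real N * t)"
      and d3: "1 - p_coag psi_mult N t \<le> 1" using pn(1,2,3) .
    have mk: "0 \<le> mean_n psi_mult N t k" "mean_n psi_mult N t k \<le> real N * (1 - p_coag psi_mult N t)"
      using pn(4)[OF kN] by auto
    have ml: "0 \<le> mean_n psi_mult N t l" "mean_n psi_mult N t l \<le> real N * (1 - p_coag psi_mult N t)"
      using pn(4)[OF lN] by auto
    note skl = pn(5)[OF kN lN] and skk = pn(5)[OF kN kN]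
    have "\<bar>mean_n psi_mult N t k\<bar> \<le> real N * (real N * exp (- real N * t))"
      using mk d2 x by (simp add: mult_left_mono order_trans)
    then have 1: "\<bar>mean_n psi_mult N t k\<bar> \<le> g N" unfolding g_def by (rule order_trans[OF _ arith1(2)[OF x E]])
    have 2: "\<bar>cov_n psi_mult N t k k\<bar> \<le> g N"
      unfolding cov_n_def g_def using skk mk d1 d2 d3
      by (intro cov_arith[OF x E]) auto
    have 3: "\<bar>cov_n psi_mult N t k l\<bar> \<le> g N"
      unfolding cov_n_def g_def using skl mk ml d1 d2 d3
      by (intro cov_arith[OF x E]) auto
    have 5: "\<bar>p_coag psi_mult N t - 1\<bar> \<le> g N"
    proof -
      have "1 - p_coag psi_mult N t \<le> g N" unfolding g_def by (rule order_trans[OF d2 arith1(1)[OF x E]])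
      then show ?thesis using d1 by simp
    qed
    have 4: "\<bar>mean_n psi_mult N t N - 1\<bar> \<le> g N" using 5 pn(6) by simp
    show ?thesis using 1 2 3 4 5 by blast
  qed
  have lim: "(\<lambda>N. q N) \<longlonglongrightarrow> 0" if "\<And>N. Suc (max k l) \<le> N \<Longrightarrow> \<bar>q N\<bar> \<le> g N" for q :: "nat \<Rightarrow> real"
    by (rule squeeze0[OF eventually_mono[OF ev that] glim])
  have L1: "(\<lambda>N. mean_n psi_mult N t k) \<longlonglongrightarrow> 0" by (rule lim) (use B in blast)
  have L2: "(\<lambda>N. var_n psi_mult N t k) \<longlonglongrightarrow> 0" unfolding var_n_def by (rule lim) (use B in blast)
  have L3: "(\<lambda>N. cov_n psi_mult N t k l) \<longlonglongrightarrow> 0" by (rule lim) (use B in blast)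
  have "(\<lambda>N. mean_n psi_mult N t N - 1) \<longlonglongrightarrow> 0" by (rule lim) (use B in blast)
  then have L4: "(\<lambda>N. mean_n psi_mult N t N) \<longlonglongrightarrow> 1" by (simp add: LIM_zero_iff)
  have "(\<lambda>N. p_coag psi_mult N t - 1) \<longlonglongrightarrow> 0" by (rule lim) (use B in blast)
  then have L5: "(\<lambda>N. p_coag psi_mult N t) \<longlonglongrightarrow> 1" by (simp add: LIM_zero_iff)
  show ?thesis using L1 L2 L3 L4 L5 by blast
qed


end
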